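(* Consider the multirate closed loop described in the context, with high-rate LTI plant $P_h$, low-rate LTI controller $K_l$, downsampler $\mathcal{S}_d$ and multirate zero-order-hold $\mathcal{H}_u$ (downsampling/upsampling factor $F\in\mathbb{N}$), and the LPTV closed-loop operators $$J_{LPTV}=\left(I+P_h\mathcal{H}_uK_l\mathcal{S}_d\right)^{-1}P_h,\qquad S_{LPTV}=\left(I+\mathcal{H}_uK_l\mathcal{S}_d P_h\right)^{-1},$$ so that $y_h=J_{LPTV}r_h$ and $u_h=S_{LPTV}r_h$. Let $\underline{J}=\mathcal{L}J_{LPTV}\mathcal{L}^{-1}$, $\underline{S}=\mathcal{L}S_{LPTV}\mathcal{L}^{-1}$, $\underline{P}=\mathcal{L}P_h\mathcal{L}^{-1}$ be the time-lifted representations and $\tilde{J}(z)=M(z)\underline{J}(z^F)M^{-1}(z)$, $\tilde{S}(z)=M(z)\underline{S}(z^F)M^{-1}(z)$, $\tilde{P}(z)=M(z)\underline{P}(z^F)M^{-1}(z)$ the frequency-lifted representations. Then $$\underline{P}=\underline{J}\,\underline{S}^{-1},\qquad \tilde{P}=\tilde{J}\,\tilde{S}^{-1}.$$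
   Context: All systems are discrete-time. The plant $P_h$ is a linear time-invariant (LTI) system operating at the high sampling rate with sampling time $h_h$; the controller $K_l$ is an LTI system operating at the low rate with sampling time $h_l=Fh_h$, $F\in\mathbb{N}$. The downsampler $\mathcal{S}_d$ maps a high-rate signal $\nu_h$ to the low-rate signal $\nu_l[l]=\nu_h[lF]$; the multirate zero-order-hold $\mathcal{H}_u$ maps a low-rate signal $\nu_l$ to the high-rate signal $\nu_h[t]=\nu_l[\lfloor t/F\rfloor]$. The closed loop is assumed well posed, so the inverses in $J_{LPTV}$ and $S_{LPTV}$ exist. The resulting operators are linear periodically time-varying (LPTV) with period $F$. The time-lifting operator $\mathcal{L}$ maps a signal $\nu_h[t]\in\mathbb{R}^{n}$ to $\underline{\nu}[l]=\begin{bmatrix}\nu_h^\top[lF] & \nu_h^\top[lF+1] & \cdots & \nu_h^\top[lF+F-1]\end{bmatrix}^\top\in\mathbb{R}^{Fn}$; it is invertible, and for an $F$-periodic LPTV operator $G$, $\mathcal{L}G\mathcal{L}^{-1}$ is LTI. With $z=e^{j\omega}$ and $\phi=e^{j2\pi/F}$, $M(z)$ is the $F\times F$ block matrix whose $(i,k)$ block ($i,k=0,\dots,F-1$) is $(z\phi^{i})^{-k}I$. *)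

theory Defs
  imports Complex_Main
    "HOL-Computational_Algebra.Formal_Laurent_Series"
    "Jordan_Normal_Form.Matrix"
    "Jordan_Normal_Form.Gauss_Jordan_Elimination"
begin

text \<open>A discrete-time signal with values in R^n is a map from time (nat) to
  real vectors of dimension n (zero initial conditions, one-sided time axis).\<close>

type_synonym signal = "nat \<Rightarrow> real vec"

definition sigs :: "nat \<Rightarrow> signal set" where
  "sigs n = {v. \<forall>t. v t \<in> carrier_vec n}"

text \<open>A (causal) LTI system with n_in inputs and n_out outputs, given by its
  impulse response (Markov parameters) G k, a n_out x n_in matrix; it acts by
  convolution.\<close>

definition is_kernel :: "nat \<Rightarrow> nat \<Rightarrow> (nat \<Rightarrow> real mat) \<Rightarrow> bool" where
  "is_kernel n_out n_in G \<longleftrightarrow> (\<forall>k. G k \<in> carrier_mat n_out n_in)"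

definition lti_op :: "nat \<Rightarrow> nat \<Rightarrow> (nat \<Rightarrow> real mat) \<Rightarrow> signal \<Rightarrow> signal" where
  "lti_op n_out n_in G v t =
     vec n_out (\<lambda>i. \<Sum>s\<le>t. \<Sum>j<n_in. G (t - s) $$ (i, j) * vec_index (v s) j)"

definition downsample :: "nat \<Rightarrow> signal \<Rightarrow> signal" where
  "downsample F v l = v (l * F)"

definition zoh :: "nat \<Rightarrow> signal \<Rightarrow> signal" where
  "zoh F v t = v (t div F)"

definition sig_add :: "signal \<Rightarrow> signal \<Rightarrow> signal" where
  "sig_add v w t = v t + w t"

text \<open>Plant P_h: m inputs, p outputs, kernel Pk (high rate).
  Controller K_l: p inputs, m outputs, kernel Kk (low rate).\<close>

definition loop_out :: "nat \<Rightarrow> nat \<Rightarrow> nat \<Rightarrow> (nat \<Rightarrow> real mat) \<Rightarrow> (nat \<Rightarrow> real mat)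
    \<Rightarrow> signal \<Rightarrow> signal" where
  "loop_out F m p Pk Kk v =
     sig_add v (lti_op p m Pk (zoh F (lti_op m p Kk (downsample F v))))"
  \<comment> \<open>I + P_h H_u K_l S_d (acting on output signals, dimension p)\<close>

definition loop_in :: "nat \<Rightarrow> nat \<Rightarrow> nat \<Rightarrow> (nat \<Rightarrow> real mat) \<Rightarrow> (nat \<Rightarrow> real mat)
    \<Rightarrow> signal \<Rightarrow> signal" where
  "loop_in F m p Pk Kk v =
     sig_add v (zoh F (lti_op m p Kk (downsample F (lti_op p m Pk v))))"
  \<comment> \<open>I + H_u K_l S_d P_h (acting on input signals, dimension m)\<close>

definition J_LPTV :: "nat \<Rightarrow> nat \<Rightarrow> nat \<Rightarrow> (nat \<Rightarrow> real mat) \<Rightarrow> (nat \<Rightarrow> real mat)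
    \<Rightarrow> signal \<Rightarrow> signal" where
  "J_LPTV F m p Pk Kk = inv_into (sigs p) (loop_out F m p Pk Kk) \<circ> lti_op p m Pk"

definition S_LPTV :: "nat \<Rightarrow> nat \<Rightarrow> nat \<Rightarrow> (nat \<Rightarrow> real mat) \<Rightarrow> (nat \<Rightarrow> real mat)
    \<Rightarrow> signal \<Rightarrow> signal" where
  "S_LPTV F m p Pk Kk = inv_into (sigs m) (loop_in F m p Pk Kk)"

text \<open>Lifting of an R^n-valued signal: block l collects samples lF, ..., lF+F-1;
  entry j*n + c of the lifted vector is component c of sample lF + j.\<close>

definition lift_sig :: "nat \<Rightarrow> nat \<Rightarrow> signal \<Rightarrow> signal" where
  "lift_sig n F v l = vec (F * n) (\<lambda>i. vec_index (v (l * F + i div n)) (i mod n))"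

definition unlift_sig :: "nat \<Rightarrow> nat \<Rightarrow> signal \<Rightarrow> signal" where
  "unlift_sig n F w t = vec n (\<lambda>c. vec_index (w (t div F)) ((t mod F) * n + c))"

definition lift_op :: "nat \<Rightarrow> nat \<Rightarrow> nat \<Rightarrow> (signal \<Rightarrow> signal) \<Rightarrow> signal \<Rightarrow> signal" where
  "lift_op F n_in n_out G = (\<lambda>w. lift_sig n_out F (G (unlift_sig n_in F w)))"

text \<open>Transfer matrix of an (LTI) operator with n_in inputs and n_out outputs,
  as a matrix of formal power series in the variable z^{-1} (impulse response).\<close>

definition impulse :: "nat \<Rightarrow> nat \<Rightarrow> signal" where
  "impulse n j t = (if t = 0 then unit_vec n j else 0\<^sub>v n)"

definition tf :: "nat \<Rightarrow> nat \<Rightarrow> (signal \<Rightarrow> signal) \<Rightarrow> complex fps mat" where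
  "tf n_in n_out G =
     mat n_out n_in (\<lambda>(i, j). Abs_fps (\<lambda>k. complex_of_real (vec_index (G (impulse n_in j) k) i)))"

text \<open>Transfer matrix evaluated at z^F, i.e. z^{-1} replaced by z^{-F}, viewed as
  formal Laurent series in z^{-1} (fls_X stands for z^{-1}).\<close>

definition tf_zF :: "nat \<Rightarrow> nat \<Rightarrow> nat \<Rightarrow> (signal \<Rightarrow> signal) \<Rightarrow> complex fls mat" where
  "tf_zF F n_in n_out G = map_mat (\<lambda>f. fps_to_fls (f oo fps_X ^ F)) (tf n_in n_out G)"

definition phi :: "nat \<Rightarrow> complex" where
  "phi F = cis (2 * pi / real F)"

text \<open>M(z): F x F block matrix with (i,k) block (z phi^i)^{-k} I_n = phi^{-ik} z^{-k} I_n.\<close>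

definition Mz :: "nat \<Rightarrow> nat \<Rightarrow> complex fls mat" where
  "Mz F n = mat (F * n) (F * n) (\<lambda>(r, c).
     if r mod n = c mod n
     then fls_const (inverse (phi F) ^ ((r div n) * (c div n))) * fls_X ^ (c div n)
     else 0)"

definition freq_lift :: "nat \<Rightarrow> nat \<Rightarrow> nat \<Rightarrow> (signal \<Rightarrow> signal) \<Rightarrow> complex fls mat" where
  "freq_lift F n_in n_out Gl =
     Mz F n_out * tf_zF F (F * n_in) (F * n_out) Gl * the (mat_inverse (Mz F n_in))"

end

theory Submission
  imports Defs "Jordan_Normal_Form.Determinant"
begin

lemma lti_in[simp]: "lti_op no ni H v t \<in> carrier_vec no"
  by (simp add: lti_op_def)
lemma lti_sigs[simp]: "lti_op no ni H v \<in> sigs no"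
  by (simp add: sigs_def)
lemma lift_sigs[simp]: "lift_sig n F v \<in> sigs (F*n)"
  by (simp add: sigs_def lift_sig_def)
lemma unlift_sigs[simp]: "unlift_sig n F v \<in> sigs n"
  by (simp add: sigs_def unlift_sig_def)
lemma sigsD: "v \<in> sigs n \<Longrightarrow> v t \<in> carrier_vec n"
  by (simp add: sigs_def)
lemma sigsD_dim: "v \<in> sigs n \<Longrightarrow> dim_vec (v t) = n"
  using sigsD carrier_vecD by blast

lemma divmod_lt: fixes b c n F :: nat assumes "c < n" "b < F" shows "b * n + c < F * n"
proof -
  have "b * n + c < b*n + n" using assms by simp
  also have "\<dots> = Suc b * n" by simp
  also have "\<dots> \<le> F * n" using assms by (intro mult_right_mono) auto
  finally show ?thesis .
qed

lemma dim_lift[simp]: "dim_vec (lift_sig n F v l) = F * n"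
  by (simp add: lift_sig_def)
lemma lift_sig_idx: "i < F * n \<Longrightarrow> lift_sig n F v l $ i = v (l * F + i div n) $ (i mod n)"
  unfolding lift_sig_def by (rule index_vec)
lemma unlift_sig_idx: "c < n \<Longrightarrow> unlift_sig n F w t $ c = w (t div F) $ ((t mod F) * n + c)"
  unfolding unlift_sig_def by (rule index_vec)
lemma lti_idx: "i < no \<Longrightarrow> lti_op no ni H v t $ i =
   (\<Sum>s\<le>t. \<Sum>j<ni. H (t - s) $$ (i, j) * v s $ j)"
  unfolding lti_op_def by (rule index_vec)

lemma unlift_lift: assumes F: "F > 0" and v: "v \<in> sigs n" shows "unlift_sig n F (lift_sig n F v) = v"
proof
  fix t
  have dm: "t div F * F + t mod F = t" by simp
  have vt: "v t \<in> carrier_vec n" using sigsD[OF v] .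
  show "unlift_sig n F (lift_sig n F v) t = v t"
  proof (rule eq_vecI)
    fix c assume "c < dim_vec (v t)"
    hence c: "c < n" using sigsD_dim[OF v] by simp
    have lt: "(t mod F) * n + c < F * n" by (rule divmod_lt) (use c F in auto)
    have e1: "((t mod F) * n + c) div n = t mod F" using c by simp
    have e2: "((t mod F) * n + c) mod n = c" using c by simp
    have "unlift_sig n F (lift_sig n F v) t $ c = lift_sig n F v (t div F) $ ((t mod F) * n + c)"
      by (rule unlift_sig_idx[OF c])
    also have "\<dots> = v (t div F * F + t mod F) $ c"
      unfolding lift_sig_idx[OF lt] e1 e2 ..
    finally show "unlift_sig n F (lift_sig n F v) t $ c = v t $ c" unfolding dm .
  next
    show "dim_vec (unlift_sig n F (lift_sig n F v) t) = dim_vec (v t)"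
      using sigsD_dim[OF v] by (simp add: unlift_sig_def)
  qed
qed

lemma lift_unlift: assumes F: "F > 0" and w: "w \<in> sigs (F*n)" shows "lift_sig n F (unlift_sig n F w) = w"
proof
  fix l
  show "lift_sig n F (unlift_sig n F w) l = w l"
  proof (rule eq_vecI)
    fix i assume "i < dim_vec (w l)"
    hence i: "i < F*n" using sigsD_dim[OF w] by simp
    hence n: "n > 0" by (cases n) auto
    have d: "i div n < F" using i by (simp add: less_mult_imp_div_less mult.commute)
    have e1: "(l * F + i div n) div F = l" using d F by simp
    have e2: "(l * F + i div n) mod F = i div n" using d by simp
    have e3: "i div n * n + i mod n = i" by simp
    have im: "i mod n < n" using n by simp
    have "lift_sig n F (unlift_sig n F w) l $ i = unlift_sig n F w (l * F + i div n) $ (i mod n)"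
      by (rule lift_sig_idx[OF i])
    also have "\<dots> = w l $ i" unfolding unlift_sig_idx[OF im] e1 e2 e3 ..
    finally show "lift_sig n F (unlift_sig n F w) l $ i = w l $ i" .
  next
    show "dim_vec (lift_sig n F (unlift_sig n F w) l) = dim_vec (w l)"
      using sigsD_dim[OF w] by (simp add: lift_sig_def)
  qed
qed


lemma sum_split: "(\<Sum>c<F*n. g c) = (\<Sum>b<F. \<Sum>j<n. g (b*n+j :: nat))"
proof -
  have "(\<Sum>c<F*n. g c) = (\<Sum>b<F. sum g {b*n..<b*n+n})"
    by (rule sum.nat_group[symmetric])
  also have "\<dots> = (\<Sum>b<F. \<Sum>j<n. g (b*n+j))"
  proof (rule sum.cong[OF refl])
    fix b
    have "sum g {0+b*n..<n+b*n} = (\<Sum>j\<in>{0..<n}. g (j + b*n))"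
      by (rule sum.shift_bounds_nat_ivl)
    thus "sum g {b*n..<b*n+n} = (\<Sum>j<n. g (b*n+j))"
      by (simp add: atLeast0LessThan add.commute)
  qed
  finally show ?thesis .
qed

lemma lti_add: assumes "\<And>s. v s \<in> carrier_vec ni" "\<And>s. w s \<in> carrier_vec ni"
  shows "lti_op no ni H (sig_add v w) = sig_add (lti_op no ni H v) (lti_op no ni H w)"
proof
  fix t
  show "lti_op no ni H (sig_add v w) t = sig_add (lti_op no ni H v) (lti_op no ni H w) t"
  proof (rule eq_vecI)
    fix i assume "i < dim_vec (sig_add (lti_op no ni H v) (lti_op no ni H w) t)"
    hence i: "i < no" by (simp add: sig_add_def lti_op_def)
    have "lti_op no ni H (sig_add v w) t $ i = (\<Sum>s\<le>t. \<Sum>j<ni. H (t - s) $$ (i, j) * (v s + w s) $ j)"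
      unfolding lti_idx[OF i] sig_add_def ..
    also have "\<dots> = (\<Sum>s\<le>t. \<Sum>j<ni. H (t - s) $$ (i, j) * v s $ j + H (t - s) $$ (i, j) * w s $ j)"
      using carrier_vecD[OF assms(2)] by (intro sum.cong refl) (simp add: distrib_left)
    also have "\<dots> = lti_op no ni H v t $ i + lti_op no ni H w t $ i"
      unfolding lti_idx[OF i] by (simp add: sum.distrib)
    also have "\<dots> = sig_add (lti_op no ni H v) (lti_op no ni H w) t $ i"
      using i by (simp add: sig_add_def lti_op_def)
    finally show "lti_op no ni H (sig_add v w) t $ i = sig_add (lti_op no ni H v) (lti_op no ni H w) t $ i" .
  qed (simp add: sig_add_def lti_op_def)
qed

lemma lift_add: assumes "a \<in> sigs n" "b \<in> sigs n"
  shows "lift_sig n F (sig_add a b) = sig_add (lift_sig n F a) (lift_sig n F b)"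
proof
  fix l
  show "lift_sig n F (sig_add a b) l = sig_add (lift_sig n F a) (lift_sig n F b) l"
  proof (rule eq_vecI)
    fix i assume "i < dim_vec (sig_add (lift_sig n F a) (lift_sig n F b) l)"
    hence i: "i < F * n" by (simp add: sig_add_def lift_sig_def)
    hence "n > 0" by (cases n) auto
    hence im: "i mod n < n" by simp
    show "lift_sig n F (sig_add a b) l $ i = sig_add (lift_sig n F a) (lift_sig n F b) l $ i"
      using i im sigsD_dim[OF assms(1)] sigsD_dim[OF assms(2)]
      by (simp add: sig_add_def lift_sig_idx dim_lift)
  qed (simp add: sig_add_def lift_sig_def)
qed


definition liftk :: "nat \<Rightarrow> nat \<Rightarrow> nat \<Rightarrow> (nat \<Rightarrow> real mat) \<Rightarrow> nat \<Rightarrow> real mat" where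
  "liftk F no ni H l = mat (F*no) (F*ni) (\<lambda>(r,c). if c div ni \<le> l*F + r div no
     then H (l*F + r div no - c div ni) $$ (r mod no, c mod ni) else 0)"

lemma lift_lti: assumes F: "F > 0"
  shows "lift_sig no F (lti_op no ni H (unlift_sig ni F w)) = lti_op (F*no) (F*ni) (liftk F no ni H) w"
proof
  fix l
  show "lift_sig no F (lti_op no ni H (unlift_sig ni F w)) l = lti_op (F*no) (F*ni) (liftk F no ni H) w l"
  proof (rule eq_vecI)
    fix r assume "r < dim_vec (lti_op (F*no) (F*ni) (liftk F no ni H) w l)"
    hence r: "r < F * no" by (simp add: lti_op_def)
    hence "no > 0" by (cases no) auto
    hence i: "r mod no < no" by simp
    have a: "r div no < F" using r by (simp add: less_mult_imp_div_less mult.commute)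
    define N where "N = l * F + r div no"
    define g where "g s = (\<Sum>j<ni. H (N - s) $$ (r mod no, j) * w (s div F) $ ((s mod F) * ni + j))" for s
    define G where "G s = (if s \<le> N then g s else 0)" for s
    have NL: "N < Suc l * F" using a unfolding N_def by simp
    have "lift_sig no F (lti_op no ni H (unlift_sig ni F w)) l $ r
       = lti_op no ni H (unlift_sig ni F w) N $ (r mod no)"
      unfolding lift_sig_idx[OF r] N_def ..
    also have "\<dots> = (\<Sum>s\<le>N. g s)"
      unfolding lti_idx[OF i] g_def by (intro sum.cong refl) (simp add: unlift_sig_idx)
    also have "\<dots> = (\<Sum>s<Suc l * F. G s)"
      by (rule sum.mono_neutral_cong_right[symmetric]) (use NL in \<open>auto simp: G_def\<close>)
    also have "\<dots> = (\<Sum>l'<Suc l. \<Sum>b<F. G (l' * F + b))"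
      by (rule sum_split)
    also have "\<dots> = (\<Sum>l'\<le>l. \<Sum>c<F*ni. liftk F no ni H (l - l') $$ (r, c) * w l' $ c)"
      unfolding lessThan_Suc_atMost
    proof (rule sum.cong[OF refl])
      fix l' assume "l' \<in> {..l}"
      hence ll: "l' \<le> l" by simp
      have "(\<Sum>c<F*ni. liftk F no ni H (l - l') $$ (r, c) * w l' $ c)
          = (\<Sum>b<F. \<Sum>j<ni. liftk F no ni H (l - l') $$ (r, b*ni+j) * w l' $ (b*ni+j))"
        by (rule sum_split)
      also have "\<dots> = (\<Sum>b<F. G (l' * F + b))"
      proof (rule sum.cong[OF refl])
        fix b assume "b \<in> {..<F}"
        hence b: "b < F" by simp
        have XY: "l' * F \<le> l * F" using ll by simp
        have dd: "(l - l') * F = l * F - l' * F" by (simp add: diff_mult_distrib)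
        have cond: "(b \<le> (l - l') * F + r div no) = (l' * F + b \<le> N)"
          unfolding dd N_def using XY by linarith
        have eqN: "(l - l') * F + r div no - b = N - (l' * F + b)"
          unfolding dd N_def using XY by linarith
        have dv: "(l' * F + b) div F = l'" using b by simp
        have md: "(l' * F + b) mod F = b" using b by simp
        show "(\<Sum>j<ni. liftk F no ni H (l - l') $$ (r, b*ni+j) * w l' $ (b*ni+j)) = G (l' * F + b)"
        proof (cases "l' * F + b \<le> N")
          case True
          show ?thesis unfolding G_def g_def using True
            by (auto intro!: sum.cong simp: liftk_def divmod_lt[OF _ b] r dv md cond[symmetric] eqN mod_less[OF b])
        next
          case False
          show ?thesis unfolding G_def using False
            by (auto intro!: sum.neutral simp: liftk_def divmod_lt[OF _ b] r cond[symmetric])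
        qed
      qed
      finally show "(\<Sum>b<F. G (l' * F + b)) = (\<Sum>c<F*ni. liftk F no ni H (l - l') $$ (r, c) * w l' $ c)" by (rule sym)
    qed
    also have "\<dots> = lti_op (F*no) (F*ni) (liftk F no ni H) w l $ r"
      unfolding lti_idx[OF r] ..
    finally show "lift_sig no F (lti_op no ni H (unlift_sig ni F w)) l $ r = lti_op (F*no) (F*ni) (liftk F no ni H) w l $ r" .
  qed (simp add: lti_op_def)
qed


definition KLk :: "nat \<Rightarrow> nat \<Rightarrow> nat \<Rightarrow> (nat \<Rightarrow> real mat) \<Rightarrow> nat \<Rightarrow> real mat" where
  "KLk F m p K l = mat (F*m) (F*p) (\<lambda>(r,c). if c < p then K l $$ (r mod m, c) else 0)"

lemma lift_zoh: assumes F: "F > 0"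
  shows "lift_sig m F (zoh F (lti_op m p K (downsample F (unlift_sig p F z)))) = lti_op (F*m) (F*p) (KLk F m p K) z"
proof
  fix l
  show "lift_sig m F (zoh F (lti_op m p K (downsample F (unlift_sig p F z)))) l = lti_op (F*m) (F*p) (KLk F m p K) z l"
  proof (rule eq_vecI)
    fix r assume "r < dim_vec (lti_op (F*m) (F*p) (KLk F m p K) z l)"
    hence r: "r < F * m" by (simp add: lti_op_def)
    hence "m > 0" by (cases m) auto
    hence i: "r mod m < m" by simp
    have a: "r div m < F" using r by (simp add: less_mult_imp_div_less mult.commute)
    have lF: "(l * F + r div m) div F = l" using a F by simp
    have pF: "p \<le> F * p" using F by simp
    have xp: "\<And>x. x < p \<Longrightarrow> x < F*p" using pF by linarith
    have "lift_sig m F (zoh F (lti_op m p K (downsample F (unlift_sig p F z)))) l $ r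
      = lti_op m p K (downsample F (unlift_sig p F z)) l $ (r mod m)"
      unfolding lift_sig_idx[OF r] zoh_def lF ..
    also have "\<dots> = (\<Sum>s\<le>l. \<Sum>j<p. K (l - s) $$ (r mod m, j) * z s $ j)"
      unfolding lti_idx[OF i] using F by (intro sum.cong refl) (simp add: downsample_def unlift_sig_idx)
    also have "\<dots> = (\<Sum>s\<le>l. \<Sum>c<F*p. KLk F m p K (l - s) $$ (r, c) * z s $ c)"
    proof (rule sum.cong[OF refl])
      fix s
      show "(\<Sum>j<p. K (l - s) $$ (r mod m, j) * z s $ j) = (\<Sum>c<F*p. KLk F m p K (l - s) $$ (r, c) * z s $ c)"
        by (rule sum.mono_neutral_cong_right[symmetric]) (use pF r xp in \<open>auto simp: KLk_def\<close>)
    qed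
    also have "\<dots> = lti_op (F*m) (F*p) (KLk F m p K) z l $ r"
      unfolding lti_idx[OF r] ..
    finally show "lift_sig m F (zoh F (lti_op m p K (downsample F (unlift_sig p F z)))) l $ r = lti_op (F*m) (F*p) (KLk F m p K) z l $ r" .
  qed (simp add: lti_op_def)
qed


definition tfk :: "nat \<Rightarrow> nat \<Rightarrow> (nat \<Rightarrow> real mat) \<Rightarrow> complex fps mat" where
  "tfk no ni H = mat no ni (\<lambda>(i,j). Abs_fps (\<lambda>k. complex_of_real (H k $$ (i,j))))"

lemma tfk_carrier[simp]: "tfk no ni H \<in> carrier_mat no ni"
  by (simp add: tfk_def)
lemma tf_carrier[simp]: "tf ni no G \<in> carrier_mat no ni"
  by (simp add: tf_def)

lemma impulse_sigs[simp]: "impulse n j \<in> sigs n"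
  by (simp add: sigs_def impulse_def)

lemma tf_cong: assumes "\<And>j. j < ni \<Longrightarrow> G (impulse ni j) = G' (impulse ni j)"
  shows "tf ni no G = tf ni no G'"
  unfolding tf_def by (rule cong_mat) (auto simp: assms)

lemma tf_lti: "tf ni no (\<lambda>e. lti_op no nm H (Q e)) = tfk no nm H * tf ni nm Q"
proof (rule eq_matI)
  fix i j assume "i < dim_row (tfk no nm H * tf ni nm Q)" "j < dim_col (tfk no nm H * tf ni nm Q)"
  hence i: "i < no" and j: "j < ni" by (auto simp: tfk_def tf_def)
  let ?q = "\<lambda>s l. Q (impulse ni j) s $ l"
  let ?h = "\<lambda>s l. H s $$ (i, l)"
  show "tf ni no (\<lambda>e. lti_op no nm H (Q e)) $$ (i, j) = (tfk no nm H * tf ni nm Q) $$ (i, j)"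
  proof (rule fps_ext)
    fix k
    have "tf ni no (\<lambda>e. lti_op no nm H (Q e)) $$ (i, j) $ k
       = (\<Sum>s\<le>k. \<Sum>l<nm. complex_of_real (?h (k - s) l) * complex_of_real (?q s l))"
      using i j by (simp add: tf_def lti_idx)
    also have "\<dots> = (\<Sum>l<nm. \<Sum>s\<le>k. complex_of_real (?h (k - s) l) * complex_of_real (?q s l))"
      by (rule sum.swap)
    also have "\<dots> = (\<Sum>l<nm. \<Sum>a\<in>{0..k}. complex_of_real (?h a l) * complex_of_real (?q (k - a) l))"
    proof (rule sum.cong[OF refl])
      fix l
      have "(\<Sum>s\<in>{0..k}. complex_of_real (?h (k - s) l) * complex_of_real (?q s l))
        = (\<Sum>s\<in>{0..k}. complex_of_real (?h (k - (k + 0 - s)) l) * complex_of_real (?q (k + 0 - s) l))"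
        by (rule sum.atLeastAtMost_rev)
      also have "\<dots> = (\<Sum>a\<in>{0..k}. complex_of_real (?h a l) * complex_of_real (?q (k - a) l))"
        by (intro sum.cong refl) auto
      finally show "(\<Sum>s\<le>k. complex_of_real (?h (k - s) l) * complex_of_real (?q s l))
        = (\<Sum>a\<in>{0..k}. complex_of_real (?h a l) * complex_of_real (?q (k - a) l))"
        by (simp add: atLeast0AtMost)
    qed
    also have "\<dots> = (tfk no nm H * tf ni nm Q) $$ (i, j) $ k"
      using i j by (simp add: tfk_def tf_def scalar_prod_def fps_sum_nth fps_mult_nth atLeast0LessThan)
    finally show "tf ni no (\<lambda>e. lti_op no nm H (Q e)) $$ (i, j) $ k = (tfk no nm H * tf ni nm Q) $$ (i, j) $ k" .
  qed
qed (auto simp: tf_def tfk_def)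

lemma tf_id: "tf n n (\<lambda>e. e) = 1\<^sub>m n"
proof (rule eq_matI)
  fix i j assume "i < dim_row (1\<^sub>m n :: complex fps mat)" "j < dim_col (1\<^sub>m n :: complex fps mat)"
  hence i: "i < n" and j: "j < n" by auto
  show "tf n n (\<lambda>e. e) $$ (i, j) = 1\<^sub>m n $$ (i, j)"
    using i j by (auto intro!: fps_ext simp: tf_def impulse_def)
qed (auto simp: tf_def)

lemma tf_add: assumes "\<And>j k. j < ni \<Longrightarrow> B (impulse ni j) k \<in> carrier_vec no"
  shows "tf ni no (\<lambda>e. sig_add (A e) (B e)) = tf ni no A + tf ni no B"
proof (rule eq_matI)
  fix i j assume "i < dim_row (tf ni no A + tf ni no B)" "j < dim_col (tf ni no A + tf ni no B)"
  hence i: "i < no" and j: "j < ni" by (auto simp: tf_def)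
  show "tf ni no (\<lambda>e. sig_add (A e) (B e)) $$ (i, j) = (tf ni no A + tf ni no B) $$ (i, j)"
    using i j carrier_vecD[OF assms[OF j]] by (auto intro!: fps_ext simp: tf_def sig_add_def)
qed (auto simp: tf_def)



lemma phi_pow_F: "F > 0 \<Longrightarrow> phi F ^ F = 1"
proof -
  assume F: "F > 0"
  have "phi F ^ F = cis (real F * (2 * pi / real F))" unfolding phi_def by (rule DeMoivre)
  also have "real F * (2 * pi / real F) = 2 * pi" using F by simp
  finally show ?thesis by simp
qed

lemma phi_nz[simp]: "phi F \<noteq> 0"
  unfolding phi_def by (metis cis_neq_zero)

lemma rou_term: "inverse (phi F) ^ (i*k) * phi F ^ (k*l) = cis (2 * pi * (real l - real i) / real F) ^ k"
proof -
  let ?t = "2 * pi / real F"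
  have "inverse (phi F) ^ (i*k) = cis (real (i*k) * (- ?t))"
    unfolding phi_def power_inverse DeMoivre cis_inverse by simp
  moreover have "phi F ^ (k*l) = cis (real (k*l) * ?t)" unfolding phi_def by (rule DeMoivre)
  moreover have "cis (2 * pi * (real l - real i) / real F) ^ k = cis (real k * (2 * pi * (real l - real i) / real F))"
    by (rule DeMoivre)
  moreover have "real (i*k) * (- ?t) + real (k*l) * ?t = real k * (2 * pi * (real l - real i) / real F)"
    by (simp add: algebra_simps diff_divide_distrib)
  ultimately show ?thesis by (simp add: cis_mult)
qed

lemma rou_sum: assumes F: "F > 0" and i: "i < F" and l: "l < F"
  shows "(\<Sum>k<F. inverse (phi F) ^ (i*k) * phi F ^ (k*l)) = (if i = l then of_nat F else 0)"
proof -
  define \<rho> where "\<rho> = cis (2 * pi * (real l - real i) / real F)"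
  have "(\<Sum>k<F. inverse (phi F) ^ (i*k) * phi F ^ (k*l)) = (\<Sum>k<F. \<rho> ^ k)"
    unfolding \<rho>_def rou_term ..
  also have "\<dots> = (if i = l then of_nat F else 0)"
  proof (cases "i = l")
    case True
    thus ?thesis by (simp add: \<rho>_def)
  next
    case False
    have rF: "\<rho> ^ F = 1"
    proof -
      have "\<rho> ^ F = cis (real F * (2 * pi * (real l - real i) / real F))"
        unfolding \<rho>_def by (rule DeMoivre)
      also have "real F * (2 * pi * (real l - real i) / real F) = 2 * pi * real_of_int (int l - int i)"
        using F by simp
      also have "cis \<dots> = 1" by (rule cis_multiple_2pi) simp
      finally show ?thesis .
    qed
    have r1: "\<rho> \<noteq> 1"
    proof
      assume "\<rho> = 1"
      hence "cos (2 * pi * (real l - real i) / real F) = 1"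
        unfolding \<rho>_def by (metis Re_complex_of_real cis.sel(1) of_real_1)
      then obtain n :: int where n: "2 * pi * (real l - real i) / real F = n * 2 * pi"
        by (auto simp: cos_one_2pi_int)
      hence "2 * pi * (real l - real i) = 2 * pi * (n * real F)" using F by (simp add: field_simps)
      hence "real l - real i = n * real F" using pi_gt_zero by (metis mult_cancel_left mult_eq_0_iff pi_neq_zero zero_neq_numeral)
      hence e: "int l - int i = n * int F"
        by (metis of_int_eq_iff of_int_mult of_int_of_nat_eq of_int_diff)
      show False
      proof (cases "n = 0")
        case True thus False using e False by simp
      next
        case nz: False
        show False
        proof (cases "n > 0")
          case True
          hence "n * int F \<ge> int F" using F by simp
          thus False using e l by linarith
        next
          case False
          hence "n \<le> -1" using nz by simp
          hence "n * int F \<le> - int F" using F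
            by (metis mult_minus_left mult_right_mono mult_1 of_nat_0_le_iff)
          thus False using e i by linarith
        qed
      qed
    qed
    have "(\<Sum>k<F. \<rho> ^ k) = (\<rho> ^ F - 1) / (\<rho> - 1)" by (rule geometric_sum[OF r1])
    thus ?thesis using rF False by simp
  qed
  finally show ?thesis .
qed


definition Minv :: "nat \<Rightarrow> nat \<Rightarrow> complex fls mat" where
  "Minv F n = mat (F * n) (F * n) (\<lambda>(r, c).
     if r mod n = c mod n
     then fls_const (phi F ^ ((r div n) * (c div n)) / of_nat F) * inverse fls_X ^ (r div n)
     else 0)"

lemma fls_const_sum: "fls_const (sum f A) = (\<Sum>a\<in>A. fls_const (f a))"
  using sum_comp_morphism[of fls_const f A] by (simp add: fls_plus_const o_def)

lemma X_inv_pow: "(fls_X :: complex fls) ^ b * inverse fls_X ^ b = 1"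
  by (simp add: power_mult_distrib[symmetric])

lemma Mz_Minv: assumes F: "F > 0" shows "Mz F n * Minv F n = 1\<^sub>m (F * n)"
proof (rule eq_matI)
  fix r r2 assume "r < dim_row (1\<^sub>m (F * n) :: complex fls mat)" "r2 < dim_col (1\<^sub>m (F * n) :: complex fls mat)"
  hence r: "r < F * n" and r2: "r2 < F * n" by auto
  hence n: "n > 0" by (cases n) auto
  have ri: "r div n < F" using r by (simp add: less_mult_imp_div_less mult.commute)
  have rl: "r2 div n < F" using r2 by (simp add: less_mult_imp_div_less mult.commute)
  define i where "i = r div n"
  define l where "l = r2 div n"
  define ph where "ph = phi F"
  let ?A = "Mz F n" and ?B = "Minv F n"
  have "(?A * ?B) $$ (r, r2) = row ?A r \<bullet> col ?B r2"
    using r r2 by (simp add: Mz_def Minv_def)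
  also have "\<dots> = (\<Sum>c<F*n. ?A $$ (r, c) * ?B $$ (c, r2))"
    unfolding scalar_prod_def using r r2
    by (auto simp: Mz_def Minv_def atLeast0LessThan intro!: sum.cong)
  also have "\<dots> = (\<Sum>b<F. \<Sum>j<n. ?A $$ (r, b*n+j) * ?B $$ (b*n+j, r2))"
    by (rule sum_split)
  also have "\<dots> = (\<Sum>b<F. \<Sum>j<n. if j = r mod n then (if r mod n = r2 mod n then
        fls_const (inverse ph ^ (i*b) * ph ^ (b*l) / of_nat F) else 0) else 0)"
  proof (intro sum.cong refl)
    fix b j assume b: "b \<in> {..<F}" and j: "j \<in> {..<n}"
    have bj: "b*n+j < F*n" using b j by (intro divmod_lt) auto
    have d: "(b*n+j) div n = b" and m: "(b*n+j) mod n = j" using j by auto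
    have eA: "?A $$ (r, b*n+j) = (if r mod n = j then fls_const (inverse ph ^ (i*b)) * fls_X ^ b else 0)"
      using r bj j by (simp add: Mz_def d m i_def ph_def)
    have eB: "?B $$ (b*n+j, r2) = (if j = r2 mod n then fls_const (ph ^ (b*l) / of_nat F) * inverse fls_X ^ b else 0)"
      using r2 bj j by (simp add: Minv_def d m l_def ph_def)
    have key: "fls_const a * fls_X ^ b * (fls_const c * inverse fls_X ^ b) = fls_const (a * c)" for a c :: complex
    proof -
      have "fls_const a * fls_X ^ b * (fls_const c * inverse fls_X ^ b) = fls_const a * fls_const c * (fls_X ^ b * inverse fls_X ^ b)"
        by (simp add: ac_simps)
      also have "\<dots> = fls_const (a * c)" unfolding X_inv_pow by simp
      finally show ?thesis .
    qed
    show "?A $$ (r, b*n+j) * ?B $$ (b*n+j, r2) = (if j = r mod n then (if r mod n = r2 mod n then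
        fls_const (inverse ph ^ (i*b) * ph ^ (b*l) / of_nat F) else 0) else 0)"
      unfolding eA eB by (auto simp: key times_divide_eq_right)
  qed
  also have "\<dots> = (\<Sum>b<F. if r mod n = r2 mod n then
        fls_const (inverse ph ^ (i*b) * ph ^ (b*l) / of_nat F) else 0)"
    using n by (simp add: sum.delta)
  also have "\<dots> = (if r mod n = r2 mod n then fls_const ((\<Sum>b<F. inverse ph ^ (i*b) * ph ^ (b*l)) / of_nat F) else 0)"
    by (simp add: fls_const_sum sum_divide_distrib)
  also have "\<dots> = (if r mod n = r2 mod n \<and> i = l then 1 else 0)"
    unfolding ph_def rou_sum[OF F ri[folded i_def] rl[folded l_def]] using F by simp
  also have "\<dots> = 1\<^sub>m (F * n) $$ (r, r2)"
  proof -
    have "(r mod n = r2 mod n \<and> r div n = r2 div n) = (r = r2)" by (metis div_mult_mod_eq)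
    thus ?thesis using r r2 unfolding i_def l_def by simp
  qed
  finally show "(?A * ?B) $$ (r, r2) = 1\<^sub>m (F * n) $$ (r, r2)" .
qed (auto simp: Mz_def Minv_def)


lemma inv_exists: assumes A: "(A :: 'a :: field mat) \<in> carrier_mat n n" and B: "B \<in> carrier_mat n n"
  and AB: "A * B = 1\<^sub>m n"
  shows "\<exists>C. mat_inverse A = Some C \<and> A * C = 1\<^sub>m n \<and> C * A = 1\<^sub>m n \<and> C \<in> carrier_mat n n"
proof -
  have "det A * det B = 1" using det_mult[OF A B] AB by simp
  hence "det A \<noteq> 0" by auto
  hence U: "A \<in> Units (ring_mat TYPE('a) n ())" by (rule det_non_zero_imp_unit[OF A])
  show ?thesis
  proof (cases "mat_inverse A")
    case None
    thus ?thesis using mat_inverse(1)[OF A None, of "()"] U by simp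
  next
    case (Some C)
    thus ?thesis using mat_inverse(2)[OF A Some] by simp
  qed
qed

lemma hom_zF: assumes F: "F > 0" shows "semiring_hom (\<lambda>f :: complex fps. fps_to_fls (f oo fps_X ^ F))"
proof
  have X0: "(fps_X ^ F :: complex fps) $ 0 = 0" using F by simp
  fix x y :: "complex fps"
  show "fps_to_fls ((x + y) oo fps_X ^ F) = fps_to_fls (x oo fps_X ^ F) + fps_to_fls (y oo fps_X ^ F)"
    by (simp add: fps_compose_add_distrib)
  show "fps_to_fls ((x * y) oo fps_X ^ F) = fps_to_fls (x oo fps_X ^ F) * fps_to_fls (y oo fps_X ^ F)"
    by (simp add: fps_compose_mult_distrib[OF X0] fls_times_fps_to_fls)
qed simp_all

lemma (in semiring_hom) mat_hom_add: assumes "A \<in> carrier_mat nr nc" "B \<in> carrier_mat nr nc"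
  shows "mat\<^sub>h (A + B) = mat\<^sub>h A + mat\<^sub>h B"
  using assms by (intro eq_matI) (auto simp: hom_add)

lemma Mz_carrier[simp]: "Mz F n \<in> carrier_mat (F*n) (F*n)"
  by (simp add: Mz_def)
lemma Minv_carrier[simp]: "Minv F n \<in> carrier_mat (F*n) (F*n)"
  by (simp add: Minv_def)


theorem theorem1:
  fixes F m p :: nat and Pk Kk :: "nat \<Rightarrow> real mat"
  assumes F: "F > 0"
    and P_lti: "is_kernel p m Pk"
    and K_lti: "is_kernel m p Kk"
    and wp_out: "bij_betw (loop_out F m p Pk Kk) (sigs p) (sigs p)"
    and wp_in: "bij_betw (loop_in F m p Pk Kk) (sigs m) (sigs m)"
  defines "Pl \<equiv> lift_op F m p (lti_op p m Pk)"
    and "Jl \<equiv> lift_op F m p (J_LPTV F m p Pk Kk)"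
    and "Sl \<equiv> lift_op F m m (S_LPTV F m p Pk Kk)"
  shows "(\<forall>w \<in> sigs (F * m). Pl w = Jl (inv_into (sigs (F * m)) Sl w))
    \<and> (\<exists>Sinv. mat_inverse (freq_lift F m m Sl) = Some Sinv
              \<and> freq_lift F m p Pl = freq_lift F m p Jl * Sinv)"
proof -
  define P where "P = lti_op p m Pk"
  define Lin where "Lin = loop_in F m p Pk Kk"
  define Lout where "Lout = loop_out F m p Pk Kk"
  define S where "S = S_LPTV F m p Pk Kk"
  define J where "J = J_LPTV F m p Pk Kk"
  define Ll where "Ll w = lift_sig m F (Lin (unlift_sig m F w))" for w
  define PL where "PL = liftk F p m Pk"
  define KL where "KL = KLk F m p Kk"
  have Sdef: "S = inv_into (sigs m) Lin" unfolding S_def Lin_def S_LPTV_def ..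
  have Jdef: "J = inv_into (sigs p) Lout \<circ> P" unfolding J_def Lout_def P_def J_LPTV_def ..
  have Pl_eq: "Pl w = lift_sig p F (P (unlift_sig m F w))" for w
    unfolding Pl_def P_def lift_op_def ..
  have Jl_eq: "Jl w = lift_sig p F (J (unlift_sig m F w))" for w
    unfolding Jl_def J_def lift_op_def ..
  have Sl_eq: "Sl w = lift_sig m F (S (unlift_sig m F w))" for w
    unfolding Sl_def S_def lift_op_def ..
  have inj_in: "inj_on Lin (sigs m)" using wp_in unfolding Lin_def by (rule bij_betw_imp_inj_on)
  have surj_in: "Lin ` sigs m = sigs m" using wp_in unfolding Lin_def by (rule bij_betw_imp_surj_on)
  have inj_out: "inj_on Lout (sigs p)" using wp_out unfolding Lout_def by (rule bij_betw_imp_inj_on)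
  have Lin_sigs: "u \<in> sigs m \<Longrightarrow> Lin u \<in> sigs m" for u using surj_in by blast
  have S_sigs: "x \<in> sigs m \<Longrightarrow> S x \<in> sigs m" for x
    unfolding Sdef by (rule inv_into_into) (simp add: surj_in)
  have LinS: "x \<in> sigs m \<Longrightarrow> Lin (S x) = x" for x
    using f_inv_into_f[of x Lin "sigs m"] surj_in unfolding Sdef by simp
  have SLin: "u \<in> sigs m \<Longrightarrow> S (Lin u) = u" for u
    unfolding Sdef by (rule inv_into_f_f[OF inj_in])
  have P_sigs: "P u \<in> sigs p" for u unfolding P_def by simp
  have Lin_unf: "Lin u = sig_add u (zoh F (lti_op m p Kk (downsample F (P u))))" for u
    unfolding Lin_def loop_in_def P_def ..
  have zoh_in: "zoh F (lti_op m p Kk x) s \<in> carrier_vec m" for x s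
    by (simp add: zoh_def)
  have JLin: "J (Lin u) = P u" if u: "u \<in> sigs m" for u
  proof -
    have "P (Lin u) = sig_add (P u) (P (zoh F (lti_op m p Kk (downsample F (P u)))))"
      unfolding Lin_unf P_def by (rule lti_add) (use sigsD[OF u] zoh_in in auto)
    also have "\<dots> = Lout (P u)"
      unfolding Lout_def loop_out_def P_def ..
    finally have "P (Lin u) = Lout (P u)" .
    hence "J (Lin u) = inv_into (sigs p) Lout (Lout (P u))" unfolding Jdef by simp
    also have "\<dots> = P u" by (rule inv_into_f_f[OF inj_out P_sigs])
    finally show ?thesis .
  qed
  have JP: "x \<in> sigs m \<Longrightarrow> J x = P (S x)" for x
    using JLin[OF S_sigs, of x] LinS[of x] by simp
  have SlLl: "Sl (Ll w) = w" if w: "w \<in> sigs (F*m)" for w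
  proof -
    have u: "unlift_sig m F w \<in> sigs m" by simp
    have "Sl (Ll w) = lift_sig m F (S (Lin (unlift_sig m F w)))"
      unfolding Sl_eq Ll_def unlift_lift[OF F Lin_sigs[OF u]] ..
    also have "\<dots> = w" unfolding SLin[OF u] lift_unlift[OF F w] ..
    finally show ?thesis .
  qed
  have inj_Sl: "inj_on Sl (sigs (F*m))"
  proof (rule inj_onI)
    fix w1 w2 assume w1: "w1 \<in> sigs (F*m)" and w2: "w2 \<in> sigs (F*m)" and e: "Sl w1 = Sl w2"
    have "S (unlift_sig m F w1) = S (unlift_sig m F w2)"
      using arg_cong[OF e, of "unlift_sig m F"] unfolding Sl_eq
      by (simp add: unlift_lift[OF F S_sigs])
    hence "unlift_sig m F w1 = unlift_sig m F w2"
      by (metis LinS unlift_sigs)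
    thus "w1 = w2" by (metis lift_unlift[OF F w1] lift_unlift[OF F w2])
  qed
  have Ll_sigs: "Ll w \<in> sigs (F*m)" for w unfolding Ll_def by simp
  have invSl: "inv_into (sigs (F*m)) Sl w = Ll w" if w: "w \<in> sigs (F*m)" for w
    by (rule inv_into_f_eq[OF inj_Sl]) (simp_all add: Ll_sigs SlLl[OF w])
  have part1: "\<forall>w \<in> sigs (F * m). Pl w = Jl (inv_into (sigs (F * m)) Sl w)"
  proof
    fix w assume w: "w \<in> sigs (F*m)"
    have u: "unlift_sig m F w \<in> sigs m" by simp
    have "Jl (inv_into (sigs (F * m)) Sl w) = lift_sig p F (J (Lin (unlift_sig m F w)))"
      unfolding invSl[OF w] Jl_eq Ll_def unlift_lift[OF F Lin_sigs[OF u]] ..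
    also have "\<dots> = Pl w" unfolding JLin[OF u] Pl_eq ..
    finally show "Pl w = Jl (inv_into (sigs (F * m)) Sl w)" ..
  qed
  define N where "N = F * m"
  define R where "R = F * p"
  have Jl_lti: "Jl e = lti_op R N PL (Sl e)" if e: "e \<in> sigs N" for e
  proof -
    have u: "unlift_sig m F e \<in> sigs m" by simp
    have "Jl e = lift_sig p F (P (unlift_sig m F (lift_sig m F (S (unlift_sig m F e)))))"
      unfolding Jl_eq JP[OF u] unlift_lift[OF F S_sigs[OF u]] ..
    also have "\<dots> = lti_op R N PL (Sl e)"
      unfolding P_def lift_lti[OF F] Sl_eq PL_def R_def N_def ..
    finally show ?thesis .
  qed
  have Pl_lti: "Pl e = lti_op R N PL e" for e
    unfolding Pl_eq P_def lift_lti[OF F] PL_def R_def N_def ..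
  have LlSl: "Ll (Sl e) = e" if e: "e \<in> sigs N" for e
  proof -
    have u: "unlift_sig m F e \<in> sigs m" by simp
    show ?thesis unfolding Ll_def Sl_eq unlift_lift[OF F S_sigs[OF u]] LinS[OF u]
      using lift_unlift[OF F] e unfolding N_def by simp
  qed
  have Ll_lti: "Ll x = sig_add x (lti_op N R KL (lti_op R N PL x))" if x: "x \<in> sigs N" for x
  proof -
    define u where "u = unlift_sig m F x"
    have u: "u \<in> sigs m" unfolding u_def by simp
    have z: "zoh F (lti_op m p Kk (downsample F (P u))) \<in> sigs m"
      using zoh_in by (simp add: sigs_def)
    have "Ll x = sig_add (lift_sig m F u) (lift_sig m F (zoh F (lti_op m p Kk (downsample F (P u)))))"
      unfolding Ll_def u_def[symmetric] Lin_unf by (rule lift_add[OF u z])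
    also have "lift_sig m F u = x" unfolding u_def using lift_unlift[OF F] x N_def by simp
    also have "P u = unlift_sig p F (lift_sig p F (P u))" using unlift_lift[OF F P_sigs] by simp
    also have "lift_sig m F (zoh F (lti_op m p Kk (downsample F (unlift_sig p F (lift_sig p F (P u))))))
       = lti_op N R KL (lift_sig p F (P u))"
      unfolding lift_zoh[OF F] KL_def N_def R_def ..
    also have "lift_sig p F (P u) = lti_op R N PL x"
      unfolding u_def P_def lift_lti[OF F] PL_def R_def N_def ..
    finally show ?thesis .
  qed
  define T where "T = tf N N Sl"
  define A where "A = tfk N R KL"
  define B where "B = tfk R N PL"
  have Tc: "T \<in> carrier_mat N N" unfolding T_def by simp
  have Ac: "A \<in> carrier_mat N R" unfolding A_def by simp
  have Bc: "B \<in> carrier_mat R N" unfolding B_def by simp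
  have Sl_sigs: "Sl e \<in> sigs N" for e unfolding Sl_eq N_def by simp
  have eq1: "1\<^sub>m N = T + A * (B * T)"
  proof -
    have "1\<^sub>m N = tf N N (\<lambda>e. e)" by (rule tf_id[symmetric])
    also have "\<dots> = tf N N (\<lambda>e. sig_add (Sl e) (lti_op N R KL (lti_op R N PL (Sl e))))"
      by (rule tf_cong) (use LlSl[OF impulse_sigs] Ll_lti[OF Sl_sigs] in metis)
    also have "\<dots> = T + tf N N (\<lambda>e. lti_op N R KL (lti_op R N PL (Sl e)))"
      unfolding T_def by (rule tf_add) simp
    also have "tf N N (\<lambda>e. lti_op N R KL (lti_op R N PL (Sl e))) = A * tf N R (\<lambda>e. lti_op R N PL (Sl e))"
      unfolding A_def by (rule tf_lti)
    also have "tf N R (\<lambda>e. lti_op R N PL (Sl e)) = B * T"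
      unfolding B_def T_def by (rule tf_lti)
    finally show ?thesis .
  qed
  have eqJ: "tf N R Jl = B * T"
  proof -
    have "tf N R Jl = tf N R (\<lambda>e. lti_op R N PL (Sl e))"
      by (rule tf_cong) (simp add: Jl_lti)
    also have "\<dots> = B * T" unfolding B_def T_def by (rule tf_lti)
    finally show ?thesis .
  qed
  have eqP: "tf N R Pl = B"
  proof -
    have "tf N R Pl = tf N R (\<lambda>e. lti_op R N PL ((\<lambda>e. e) e))"
      by (rule tf_cong) (simp add: Pl_lti)
    also have "\<dots> = B * 1\<^sub>m N" unfolding B_def tf_lti tf_id ..
    also have "\<dots> = B" using Bc by simp
    finally show ?thesis .
  qed
  interpret h: semiring_hom "\<lambda>f :: complex fps. fps_to_fls (f oo fps_X ^ F)" by (rule hom_zF[OF F])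
  let ?h = "map_mat (\<lambda>f :: complex fps. fps_to_fls (f oo fps_X ^ F))"
  define T' where "T' = ?h T"
  define A' where "A' = ?h A"
  define B' where "B' = ?h B"
  have T'c: "T' \<in> carrier_mat N N" unfolding T'_def using Tc by simp
  have A'c: "A' \<in> carrier_mat N R" unfolding A'_def using Ac by simp
  have B'c: "B' \<in> carrier_mat R N" unfolding B'_def using Bc by simp
  have eq1': "1\<^sub>m N = T' + A' * (B' * T')"
  proof -
    have "?h (1\<^sub>m N) = ?h (T + A * (B * T))" using eq1 by simp
    also have "\<dots> = ?h T + ?h (A * (B * T))"
      by (rule h.mat_hom_add[OF Tc mult_carrier_mat[OF Ac mult_carrier_mat[OF Bc Tc]]])
    also have "?h (A * (B * T)) = ?h A * ?h (B * T)"
      by (rule h.mat_hom_mult[OF Ac mult_carrier_mat[OF Bc Tc]])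
    also have "?h (B * T) = ?h B * ?h T"
      by (rule h.mat_hom_mult[OF Bc Tc])
    finally show ?thesis unfolding T'_def A'_def B'_def h.mat_hom_one .
  qed
  have zS: "tf_zF F N N Sl = T'" unfolding tf_zF_def T'_def T_def ..
  have zJ: "tf_zF F N R Jl = B' * T'" unfolding tf_zF_def B'_def T'_def eqJ
    using Bc Tc by (simp add: h.mat_hom_mult[of _ R N])
  have zP: "tf_zF F N R Pl = B'" unfolding tf_zF_def B'_def eqP ..
  define C where "C = 1\<^sub>m N + A' * B'"
  have Cc: "C \<in> carrier_mat N N" unfolding C_def using A'c B'c by simp
  have CT: "C * T' = 1\<^sub>m N"
  proof -
    have "C * T' = 1\<^sub>m N * T' + A' * B' * T'"
      unfolding C_def using A'c B'c T'c by (simp add: add_mult_distrib_mat[of _ N N])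
    also have "\<dots> = T' + A' * (B' * T')" using A'c B'c T'c by (simp add: assoc_mult_mat[of _ N R])
    finally show ?thesis using eq1' by simp
  qed
  have TC: "T' * C = 1\<^sub>m N" by (rule mat_mult_left_right_inverse[OF Cc T'c CT])
  obtain Nm where Nm: "mat_inverse (Mz F m) = Some Nm" "Mz F m * Nm = 1\<^sub>m N" "Nm * Mz F m = 1\<^sub>m N"
     "Nm \<in> carrier_mat N N"
    using inv_exists[OF Mz_carrier Minv_carrier Mz_Minv[OF F]] unfolding N_def by blast
  define Mm where "Mm = Mz F m"
  define Mp where "Mp = Mz F p"
  have Mmc: "Mm \<in> carrier_mat N N" unfolding Mm_def N_def by simp
  have Mpc: "Mp \<in> carrier_mat R R" unfolding Mp_def R_def by simp
  have Nmc: "Nm \<in> carrier_mat N N" by (rule Nm(4))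
  have MN: "Mm * Nm = 1\<^sub>m N" and NM: "Nm * Mm = 1\<^sub>m N" using Nm unfolding Mm_def by auto
  define X where "X = Mm * T' * Nm"
  have Xc: "X \<in> carrier_mat N N" unfolding X_def using Mmc T'c Nmc by simp
  have fS: "freq_lift F m m Sl = X"
    unfolding freq_lift_def X_def Mm_def Nm(1) N_def[symmetric] zS by simp
  define Y where "Y = Mm * C * Nm"
  have Yc: "Y \<in> carrier_mat N N" unfolding Y_def using Mmc Cc Nmc by simp
  have XY: "X * Y = 1\<^sub>m N"
  proof -
    have "X * Y = Mm * (T' * (Nm * Mm) * C) * Nm"
      unfolding X_def Y_def using Mmc T'c Nmc Cc by (simp add: assoc_mult_mat[of _ N N _ N _ N] mult_carrier_mat[of _ N N _ N])
    also have "\<dots> = Mm * Nm" unfolding NM using T'c Mmc by (simp add: TC)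
    finally show ?thesis using MN by simp
  qed
  obtain Sinv where Sinv: "mat_inverse X = Some Sinv" "X * Sinv = 1\<^sub>m N" "Sinv \<in> carrier_mat N N"
    using inv_exists[OF Xc Yc XY] by blast
  have TN: "T' * Nm = Nm * X"
  proof -
    have "Nm * X = Nm * Mm * (T' * Nm)"
      unfolding X_def using Mmc T'c Nmc by (simp add: assoc_mult_mat[of _ N N _ N _ N] mult_carrier_mat[of _ N N _ N])
    also have "\<dots> = T' * Nm" unfolding NM using T'c Nmc by simp
    finally show ?thesis ..
  qed
  have "freq_lift F m p Jl * Sinv = Mp * (B' * T') * Nm * Sinv"
    unfolding freq_lift_def Mp_def Nm(1) N_def[symmetric] R_def[symmetric] zJ by simp
  also have "\<dots> = Mp * B' * (T' * Nm) * Sinv"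
    unfolding assoc_mult_mat[OF Mpc B'c T'c, symmetric] assoc_mult_mat[OF mult_carrier_mat[OF Mpc B'c] T'c Nmc] ..
  also have "\<dots> = Mp * B' * Nm * (X * Sinv)"
    unfolding TN assoc_mult_mat[OF mult_carrier_mat[OF Mpc B'c] Nmc Xc, symmetric]
      assoc_mult_mat[OF mult_carrier_mat[OF mult_carrier_mat[OF Mpc B'c] Nmc] Xc Sinv(3)] ..
  also have "\<dots> = Mp * B' * Nm" unfolding Sinv(2) using Mpc B'c Nmc by simp
  also have "\<dots> = freq_lift F m p Pl"
    unfolding freq_lift_def Mp_def Nm(1) N_def[symmetric] R_def[symmetric] zP by simp
  finally have part2: "freq_lift F m p Pl = freq_lift F m p Jl * Sinv" ..
  show ?thesis using part1 part2 Sinv(1) fS by blast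
qed

end
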